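(* Let $n,m\geq 3$ be integers such that at least one of $n,m$ is even. Then $K_n\times K_m$ is type I, i.e. $\chi''(K_n\times K_m)=(n-1)(m-1)+1$.
   Context: All graphs are finite and simple. $K_n$ is the complete graph on $n$ vertices. A total colouring of a graph $G$ is an assignment of colours to the vertices and edges of $G$ such that any two adjacent vertices, any two edges sharing an endpoint, and any edge and each of its endpoints receive different colours. The total chromatic number $\chi''(G)$ is the minimum number of colours in a total colouring of $G$. A graph $G$ with maximum degree $\Delta(G)$ is called type I if $\chi''(G)=\Delta(G)+1$. The direct product $G\times H$ has vertex set $V(G)\times V(H)$, with $(u,v)$ adjacent to $(u',v')$ if and only if $uu'\in E(G)$ and $vv'\in E(H)$; $K_n\times K_m$ is $(n-1)(m-1)$-regular. *)

theory Defs
  imports Main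
begin

definition simple_graph :: "'a set \<Rightarrow> 'a set set \<Rightarrow> bool" where
  "simple_graph V E \<longleftrightarrow> finite V \<and> (\<forall>e\<in>E. \<exists>u v. u \<in> V \<and> v \<in> V \<and> u \<noteq> v \<and> e = {u, v})"

definition degree :: "'a set set \<Rightarrow> 'a \<Rightarrow> nat" where
  "degree E v = card {e \<in> E. v \<in> e}"

definition max_degree :: "'a set \<Rightarrow> 'a set set \<Rightarrow> nat" where
  "max_degree V E = Max (insert 0 (degree E ` V))"

definition total_colouring ::
  "'a set \<Rightarrow> 'a set set \<Rightarrow> nat \<Rightarrow> ('a \<Rightarrow> nat) \<Rightarrow> ('a set \<Rightarrow> nat) \<Rightarrow> bool" where
  "total_colouring V E k cv ce \<longleftrightarrow>
     (\<forall>v\<in>V. cv v < k) \<and> (\<forall>e\<in>E. ce e < k) \<and>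
     (\<forall>u\<in>V. \<forall>v\<in>V. {u, v} \<in> E \<longrightarrow> cv u \<noteq> cv v) \<and>
     (\<forall>e\<in>E. \<forall>f\<in>E. e \<noteq> f \<and> e \<inter> f \<noteq> {} \<longrightarrow> ce e \<noteq> ce f) \<and>
     (\<forall>e\<in>E. \<forall>v\<in>e. ce e \<noteq> cv v)"

definition total_chromatic_number :: "'a set \<Rightarrow> 'a set set \<Rightarrow> nat" where
  "total_chromatic_number V E = (LEAST k. \<exists>cv ce. total_colouring V E k cv ce)"

definition type_I :: "'a set \<Rightarrow> 'a set set \<Rightarrow> bool" where
  "type_I V E \<longleftrightarrow> total_chromatic_number V E = max_degree V E + 1"

definition KxK_vertices :: "nat \<Rightarrow> nat \<Rightarrow> (nat \<times> nat) set" where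
  "KxK_vertices n m = {0..<n} \<times> {0..<m}"

definition KxK_edges :: "nat \<Rightarrow> nat \<Rightarrow> (nat \<times> nat) set set" where
  "KxK_edges n m = {{(a, b), (a', b')} | a b a' b'.
     a < n \<and> a' < n \<and> b < m \<and> b' < m \<and> a \<noteq> a' \<and> b \<noteq> b'}"

end

theory Submission
  imports Defs
begin

lemma dvd_small_eq:
  fixes x y M :: int
  assumes "0 \<le> x" "x < M" "0 \<le> y" "y < M" "M dvd x - y"
  shows "x = y"
proof (rule ccontr)
  assume "x \<noteq> y"
  then have "x - y \<noteq> 0" by simp
  from assms(5) obtain k where k: "x - y = M * k" by (auto elim: dvdE)
  with \<open>x - y \<noteq> 0\<close> have "k \<noteq> 0" by auto
  then have "\<bar>M * k\<bar> \<ge> M" using assms by (auto simp: abs_mult)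
  with k assms show False by auto
qed

lemma mod_eq_small:
  fixes x y M :: int
  assumes "0 \<le> x" "x < M" "0 \<le> y" "y < M" "a mod M = b mod M" "x - y = a - b"
  shows "x = y"
  using assms dvd_small_eq[of x M y] by (simp add: mod_eq_dvd_iff)

definition Lo :: "int \<Rightarrow> int \<Rightarrow> int \<Rightarrow> int" where
  "Lo q b c = (2*b - c) mod q"

lemma odd_cancel2:
  fixes q z :: int
  assumes "odd q" "q dvd 2 * z" shows "q dvd z"
  using assms by (metis coprime_dvd_mult_right_iff coprime_left_2_iff_odd coprime_commute)

lemma Lo_range: "q > 0 \<Longrightarrow> 0 \<le> Lo q b c \<and> Lo q b c < q"
  by (simp add: Lo_def)

lemma Lo_diag: "0 \<le> b \<Longrightarrow> b < q \<Longrightarrow> Lo q b b = b"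
  by (simp add: Lo_def)

lemma Lo_row:
  assumes "0 \<le> c" "c < q" "0 \<le> d" "d < q" "Lo q b c = Lo q b d" shows "c = d"
  using assms mod_eq_small[of c q d "2*b-d" "2*b-c"] unfolding Lo_def by auto

lemma Lo_col:
  assumes "odd q" "0 \<le> b" "b < q" "0 \<le> d" "d < q" "Lo q b c = Lo q d c" shows "b = d"
proof -
  have "q dvd (2*b - c) - (2*d - c)" using assms(6) unfolding Lo_def by (simp add: mod_eq_dvd_iff)
  then have "q dvd 2 * (b - d)" by (simp add: algebra_simps)
  then have "q dvd b - d" using odd_cancel2 assms(1) by blast
  then show ?thesis using dvd_small_eq assms by blast
qed

lemma mod_hit:
  fixes d q x :: int
  assumes "0 \<le> d" "d < q" "q dvd d - x" shows "d = x mod q"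
proof -
  have "d mod q = x mod q" using assms(3) by (simp add: mod_eq_dvd_iff)
  then show ?thesis using assms by simp
qed

definition Lat :: "int \<Rightarrow> int \<Rightarrow> int \<Rightarrow> int" where
  "Lat m b c = (if odd m then Lo m b c
     else if b = m - 1 then (if c = m - 1 then m - 1 else (c - 2) mod (m - 1))
     else if c = m - 1 then (b - 1) mod (m - 1)
     else if c = (b + 1) mod (m - 1) then m - 1
     else Lo (m - 1) b c)"

lemma Lat_range: "m \<ge> 3 \<Longrightarrow> 0 \<le> Lat m b c \<and> Lat m b c < m"
proof -
  assume "m \<ge> 3"
  then have h: "0 \<le> x mod (m-1) \<and> x mod (m-1) < m" "0 \<le> x mod m \<and> x mod m < m" for x
    by (smt (verit) pos_mod_bound pos_mod_sign)+
  show ?thesis unfolding Lat_def Lo_def using h \<open>m \<ge> 3\<close> by auto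
qed

lemma Lat_diag: "m \<ge> 3 \<Longrightarrow> 0 \<le> b \<Longrightarrow> b < m \<Longrightarrow> Lat m b b = b"
proof -
  assume a: "m \<ge> 3" "0 \<le> b" "b < m"
  show ?thesis
  proof (cases "odd m \<or> b = m - 1")
    case True then show ?thesis using a by (auto simp: Lat_def Lo_def)
  next
    case False
    then have "b < m - 1" using a by auto
    have "b \<noteq> (b + 1) mod (m - 1)"
    proof (cases "b + 1 < m - 1")
      case True then show ?thesis using a by simp
    next
      case False then have "b + 1 = m - 1" using \<open>b < m - 1\<close> by simp
      then have "(b + 1) mod (m - 1) = 0" by (simp only: mod_self)
      moreover have "b \<noteq> 0" using a \<open>b + 1 = m - 1\<close> by linarith
      ultimately show ?thesis by simp
    qed
    then show ?thesis using a False \<open>b < m - 1\<close> by (auto simp: Lat_def Lo_def)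
  qed
qed

lemma Lat_row:
  assumes "m \<ge> 3" "0 \<le> b" "b < m" "0 \<le> c" "c < m" "0 \<le> d" "d < m" "c \<noteq> d"
  shows "Lat m b c \<noteq> Lat m b d"
proof
  assume eq: "Lat m b c = Lat m b d"
  show False
  proof (cases "odd m")
    case True then show False using eq assms Lo_row[of c m d b] by (simp add: Lat_def)
  next
    case ev: False
    define q where "q = m - 1"
    have q: "q \<ge> 2" "odd q" using assms ev by (auto simp: q_def)
    have L: "Lat m b c = (if b = q then (if c = q then q else (c - 2) mod q)
     else if c = q then (b - 1) mod q
     else if c = (b + 1) mod q then q
     else Lo q b c)" for c using ev by (simp add: Lat_def q_def)
    have lo: "0 \<le> Lo q x y \<and> Lo q x y < q" for x y using Lo_range q by auto
    have mb: "0 \<le> x mod q \<and> x mod q < q" for x using q by simp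
    have mq: "(q = x mod q) = False" "(x mod q = q) = False" for x using mb[of x] by auto
    have key: "x \<noteq> (b+1) mod q \<Longrightarrow> 0 \<le> x \<Longrightarrow> x < q \<Longrightarrow> (b - 1) mod q \<noteq> Lo q b x" for x
    proof
      assume "x \<noteq> (b+1) mod q" "0 \<le> x" "x < q" "(b - 1) mod q = Lo q b x"
      then have "q dvd (b - 1) - (2*b - x)" by (simp add: Lo_def mod_eq_dvd_iff)
      then have "q dvd x - (b + 1)" by (simp add: algebra_simps)
      then show False using mod_hit \<open>x \<noteq> (b+1) mod q\<close> \<open>0 \<le> x\<close> \<open>x < q\<close> by blast
    qed
    show False
    proof (cases "b = q")
      case True
      have LL: "Lat m b x = (if x = q then q else (x-2) mod q)" for x unfolding L[of x] using True by simp
      have "c \<le> q" "d \<le> q" using assms q by (auto simp: q_def)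
      have "0 \<le> (x-2) mod q \<and> (x-2) mod q < q" for x using q by simp
      then show False using eq assms q mod_eq_small[of "c" q d "c - 2" "d - 2"] \<open>c \<le> q\<close> \<open>d \<le> q\<close>
        unfolding LL by (smt (verit))
    next
      case False
      have "c \<le> q" "d \<le> q" using assms q by (auto simp: q_def)
      then show False using eq False key[of c] key[of d] lo[of b c] lo[of b d] mb[of "b - 1"] mb[of "c - 2"] mb[of "d - 2"] Lo_row[of c q d b]
        assms by (auto simp: L mq split: if_splits)
    qed
  qed
qed

lemma Lat_col:
  assumes "m \<ge> 3" "0 \<le> b" "b < m" "0 \<le> c" "c < m" "0 \<le> d" "d < m" "b \<noteq> d"
  shows "Lat m b c \<noteq> Lat m d c"
proof
  assume eq: "Lat m b c = Lat m d c"
  show False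
  proof (cases "odd m")
    case True then show False using eq assms Lo_col[of m b d c] by (simp add: Lat_def)
  next
    case ev: False
    define q where "q = m - 1"
    have q: "q \<ge> 2" "odd q" using assms ev by (auto simp: q_def)
    have L: "Lat m b c = (if b = q then (if c = q then q else (c - 2) mod q)
     else if c = q then (b - 1) mod q
     else if c = (b + 1) mod q then q
     else Lo q b c)" for b using ev by (simp add: Lat_def q_def)
    have lo: "0 \<le> Lo q x y \<and> Lo q x y < q" for x y using Lo_range q by auto
    have mb: "0 \<le> x mod q \<and> x mod q < q" for x using q by simp
    have mq: "(q = x mod q) = False" "(x mod q = q) = False" for x using mb[of x] by auto
    have key: "c \<noteq> (x+1) mod q \<Longrightarrow> c < q \<Longrightarrow> (c - 2) mod q \<noteq> Lo q x c" for x
    proof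
      assume "c \<noteq> (x+1) mod q" "c < q" "(c - 2) mod q = Lo q x c"
      then have "q dvd (c - 2) - (2*x - c)" by (simp add: Lo_def mod_eq_dvd_iff)
      then have "q dvd 2 * (c - (x + 1))" by (simp add: algebra_simps)
      then have "q dvd c - (x + 1)" using odd_cancel2 q by blast
      moreover have "0 \<le> c" "c < q" using assms \<open>c < q\<close> by auto
      ultimately show False using mod_hit \<open>c \<noteq> (x+1) mod q\<close> by blast
    qed
    have uq: "c = (x + 1) mod q \<Longrightarrow> c = (y + 1) mod q \<Longrightarrow> 0 \<le> x \<Longrightarrow> x < q \<Longrightarrow> 0 \<le> y \<Longrightarrow> y < q \<Longrightarrow> x = y" for x y
      using mod_eq_small[of x q y "x+1" "y+1"] by auto
    show False
    proof (cases "c = q")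
      case True
      have LL: "Lat m x c = (if x = q then q else (x-1) mod q)" for x unfolding L[of x] using True by simp
      have "b \<le> q" "d \<le> q" using assms q by (auto simp: q_def)
      have "0 \<le> (x-1) mod q \<and> (x-1) mod q < q" for x using q by simp
      then show False using eq assms q mod_eq_small[of "b" q d "b - 1" "d - 1"] \<open>b \<le> q\<close> \<open>d \<le> q\<close>
        unfolding LL by (smt (verit))
    next
      case False
      have "b \<le> q" "d \<le> q" "c < q" using assms q False by (auto simp: q_def)
      then show False using eq False key[of b] key[of d] lo[of b c] lo[of d c] mb[of "b - 1"] mb[of "d - 1"] mb[of "c - 2"] mb[of "b + 1"] mb[of "d + 1"] Lo_col[of q b d c]
        uq[of b d] assms q by (auto simp: L mq split: if_splits)
    qed
  qed
qed

definition colI :: "int \<Rightarrow> int \<Rightarrow> int \<Rightarrow> int" where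
  "colI p a a' = (if a = p then (2*a') mod p else if a' = p then (2*a) mod p else (a + a') mod p)"

lemma colI_range: "p > 0 \<Longrightarrow> 0 \<le> colI p a a' \<and> colI p a a' < p"
  by (simp add: colI_def)

lemma colI_sym: "colI p a a' = colI p a' a"
  by (simp add: colI_def add.commute)

lemma colI_inj:
  assumes "odd p" "p > 0" "0 \<le> a" "a \<le> p" "0 \<le> x" "x \<le> p" "0 \<le> y" "y \<le> p"
    "a \<noteq> x" "a \<noteq> y" "x \<noteq> y"
  shows "colI p a x \<noteq> colI p a y"
proof
  assume eq: "colI p a x = colI p a y"
  show False
  proof (cases "a = p")
    case True
    then have "x < p" "y < p" using assms by auto
    have "p dvd 2 * (x - y)" using eq True assms by (simp add: colI_def mod_eq_dvd_iff algebra_simps)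
    then have "p dvd x - y" using odd_cancel2 assms(1) by blast
    then show False using dvd_small_eq[of x p y] assms \<open>x < p\<close> \<open>y < p\<close> by auto
  next
    case aF: False
    then have "a < p" using assms by auto
    show False
    proof (cases "x = p")
      case True
      then have "y < p" using assms by auto
      have "p dvd 2*a - (a + y)" using eq True aF assms by (simp add: colI_def mod_eq_dvd_iff)
      then have "p dvd a - y" by (simp add: algebra_simps)
      then show False using dvd_small_eq[of a p y] assms \<open>a < p\<close> \<open>y < p\<close> by auto
    next
      case xF: False
      show False
      proof (cases "y = p")
        case True
        then have "x < p" using assms xF by auto
        have "p dvd (a + x) - 2*a" using eq True aF xF assms by (simp add: colI_def mod_eq_dvd_iff)
        then have "p dvd x - a" by (simp add: algebra_simps)
        then show False using dvd_small_eq[of x p a] assms \<open>a < p\<close> \<open>x < p\<close> by auto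
      next
        case False
        then have "x < p" "y < p" using assms xF by auto
        have "p dvd (a + x) - (a + y)" using eq False aF xF assms by (simp add: colI_def mod_eq_dvd_iff)
        then have "p dvd x - y" by (simp add: algebra_simps)
        then show False using dvd_small_eq[of x p y] assms \<open>y < p\<close> \<open>x < p\<close> by auto
      qed
    qed
  qed
qed

definition colK :: "nat \<Rightarrow> nat \<Rightarrow> nat \<Rightarrow> nat" where
  "colK n a a' = nat (colI (int n - 1) (int a) (int a'))"

definition LatN :: "nat \<Rightarrow> nat \<Rightarrow> nat \<Rightarrow> nat" where
  "LatN m b c = nat (Lat (int m) (int b) (int c))"

lemma colK_lt: "n \<ge> 2 \<Longrightarrow> colK n a a' < n - 1"
  using colI_range[of "int n - 1" "int a" "int a'"] by (auto simp: colK_def)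

lemma colK_sym: "colK n a a' = colK n a' a"
  by (simp add: colK_def colI_sym)

lemma colK_inj:
  assumes "even n" "n \<ge> 2" "a < n" "x < n" "y < n" "a \<noteq> x" "a \<noteq> y" "x \<noteq> y"
  shows "colK n a x \<noteq> colK n a y"
proof -
  have "odd (int n - 1)" using assms by simp
  have r: "0 \<le> colI (int n - 1) (int a) (int z)" for z using colI_range[of "int n - 1"] assms by auto
  have "colI (int n - 1) (int a) (int x) \<noteq> colI (int n - 1) (int a) (int y)"
    using colI_inj[of "int n - 1" "int a" "int x" "int y"] assms \<open>odd (int n - 1)\<close> by auto
  then show ?thesis using r[of x] r[of y] by (simp add: colK_def)
qed

lemma LatN_lt: "m \<ge> 3 \<Longrightarrow> LatN m b c < m"
  using Lat_range[of "int m" "int b" "int c"] by (auto simp: LatN_def)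

lemma LatN_diag: "m \<ge> 3 \<Longrightarrow> b < m \<Longrightarrow> LatN m b b = b"
  using Lat_diag[of "int m" "int b"] by (auto simp: LatN_def)

lemma LatN_row: "m \<ge> 3 \<Longrightarrow> b < m \<Longrightarrow> c < m \<Longrightarrow> d < m \<Longrightarrow> c \<noteq> d \<Longrightarrow> LatN m b c \<noteq> LatN m b d"
  using Lat_row[of "int m" "int b" "int c" "int d"] Lat_range[of "int m" "int b" "int c"] Lat_range[of "int m" "int b" "int d"]
  by (auto simp: LatN_def eq_nat_nat_iff)

lemma LatN_col: "m \<ge> 3 \<Longrightarrow> b < m \<Longrightarrow> c < m \<Longrightarrow> d < m \<Longrightarrow> b \<noteq> d \<Longrightarrow> LatN m b c \<noteq> LatN m d c"
  using Lat_col[of "int m" "int b" "int c" "int d"] Lat_range[of "int m" "int b" "int c"] Lat_range[of "int m" "int d" "int c"]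
  by (auto simp: LatN_def eq_nat_nat_iff)

lemma LatN_off: "m \<ge> 3 \<Longrightarrow> b < m \<Longrightarrow> c < m \<Longrightarrow> b \<noteq> c \<Longrightarrow> LatN m b c \<noteq> b \<and> LatN m b c \<noteq> c"
  using LatN_row[of m b c b] LatN_col[of m b c c] LatN_diag[of m b] LatN_diag[of m c] by auto

definition shiftN :: "nat \<Rightarrow> nat \<Rightarrow> nat \<Rightarrow> nat" where
  "shiftN m b c = (if b < c then c - b else c + m - b)"

definition Fc :: "nat \<Rightarrow> nat \<Rightarrow> nat \<times> nat \<Rightarrow> nat \<times> nat \<Rightarrow> nat" where
  "Fc n m x y = (if colK n (fst x) (fst y) = 0 then LatN m (snd x) (snd y)
     else m + (colK n (fst x) (fst y) - 1) * (m - 1) + (shiftN m (snd x) (snd y) - 1))"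

definition Gc :: "nat \<Rightarrow> nat \<Rightarrow> nat \<times> nat \<Rightarrow> nat \<times> nat \<Rightarrow> nat" where
  "Gc n m x y = (if fst x < fst y then Fc n m x y else Fc n m y x)"

definition ceK :: "nat \<Rightarrow> nat \<Rightarrow> (nat \<times> nat) set \<Rightarrow> nat" where
  "ceK n m e = (case (THE p. e = {fst p, snd p} \<and> fst (fst p) < fst (snd p)) of (x, y) \<Rightarrow> Fc n m x y)"

lemma ceK_eq: "fst x < fst y \<Longrightarrow> ceK n m {x, y} = Fc n m x y"
proof -
  assume h: "fst x < fst y"
  have "(THE p. {x, y} = {fst p, snd p} \<and> fst (fst p) < fst (snd p)) = (x, y)"
    by (rule the_equality) (use h in \<open>auto simp: doubleton_eq_iff\<close>)
  then show ?thesis by (simp add: ceK_def)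
qed

lemma ceK_G: "fst x \<noteq> fst y \<Longrightarrow> ceK n m {x, y} = Gc n m x y"
proof (cases "fst x < fst y")
  case True then show ?thesis by (simp add: Gc_def ceK_eq)
next
  case False
  assume "fst x \<noteq> fst y"
  with False have "fst y < fst x" by simp
  then have "ceK n m {y, x} = Fc n m y x" by (rule ceK_eq)
  then show ?thesis using False by (simp add: Gc_def insert_commute)
qed

lemma shift_range: "b < m \<Longrightarrow> c < m \<Longrightarrow> b \<noteq> c \<Longrightarrow> 1 \<le> shiftN m b c \<and> shiftN m b c \<le> m - 1"
  by (auto simp: shiftN_def)

lemma shift_inj2: "b < m \<Longrightarrow> c < m \<Longrightarrow> d < m \<Longrightarrow> c \<noteq> d \<Longrightarrow> shiftN m b c \<noteq> shiftN m b d"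
  by (auto simp: shiftN_def)

lemma shift_inj1: "b < m \<Longrightarrow> c < m \<Longrightarrow> d < m \<Longrightarrow> c \<noteq> d \<Longrightarrow> shiftN m c b \<noteq> shiftN m d b"
  by (auto simp: shiftN_def)

lemma block:
  fixes x y s s' d :: nat
  assumes "s < d" "s' < d" "x * d + s = y * d + s'"
  shows "x = y \<and> s = s'"
proof -
  have "d > 0" using assms by simp
  then have "x = (x * d + s) div d" "y = (y * d + s') div d" using assms(1,2) by simp_all
  moreover have "s = (x * d + s) mod d" "s' = (y * d + s') mod d" using assms(1,2) by simp_all
  ultimately show ?thesis using assms(3) by metis
qed

lemma Gc_unfold:
  assumes "fst v \<noteq> fst w"
  shows "Gc n m v w = (if colK n (fst v) (fst w) = 0 then
      (if fst v < fst w then LatN m (snd v) (snd w) else LatN m (snd w) (snd v))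
     else m + (colK n (fst v) (fst w) - 1) * (m - 1) +
       ((if fst v < fst w then shiftN m (snd v) (snd w) else shiftN m (snd w) (snd v)) - 1))"
  using assms by (auto simp: Gc_def Fc_def colK_sym)

context
  fixes n m :: nat
  assumes nev: "even n" and n4: "n \<ge> 4" and m3: "m \<ge> 3"
begin

lemma G_lt:
  assumes "fst v < n" "fst w < n" "snd v < m" "snd w < m" "fst v \<noteq> fst w" "snd v \<noteq> snd w"
  shows "Gc n m v w < (n - 1) * (m - 1) + 1"
proof -
  define i where "i = colK n (fst v) (fst w)"
  have c: "i < n - 1" using colK_lt n4 unfolding i_def by auto
  have "i - 1 \<le> n - 3" using c by linarith
  then have "(i - 1) * (m - 1) \<le> (n - 3) * (m - 1)" by (rule mult_right_mono) simp
  moreover have "(n - 1) * (m - 1) = (n - 3) * (m - 1) + 2 * (m - 1)"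
  proof -
    have h: "n - 1 = (n - 3) + 2" using n4 by linarith
    have "(n - 1) * (m - 1) = ((n - 3) + 2) * (m - 1)" by (simp only: h)
    also have "\<dots> = (n - 3) * (m - 1) + 2 * (m - 1)" by (rule add_mult_distrib)
    finally show ?thesis .
  qed
  ultimately have B: "m + (i - 1) * (m - 1) + (m - 2) < (n - 1) * (m - 1) + 1" using m3 by linarith
  define sh where "sh = (if fst v < fst w then shiftN m (snd v) (snd w) else shiftN m (snd w) (snd v))"
  have "sh \<le> m - 1" using shift_range[of "snd v" m "snd w"] shift_range[of "snd w" m "snd v"] assms
    unfolding sh_def by auto
  then have S: "sh - 1 \<le> m - 2" by linarith
  define la where "la = (if fst v < fst w then LatN m (snd v) (snd w) else LatN m (snd w) (snd v))"
  have La: "la < m" using LatN_lt m3 unfolding la_def by auto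
  have G: "Gc n m v w = (if i = 0 then la else m + (i - 1) * (m - 1) + (sh - 1))"
    unfolding Gc_unfold[OF assms(5)] i_def[symmetric] la_def sh_def by simp
  show ?thesis
  proof (cases "i = 0")
    case True
    have "la < (n - 1) * (m - 1) + 1" using La B by linarith
    then show ?thesis unfolding G using True by simp
  next
    case False
    have "m + (i - 1) * (m - 1) + (sh - 1) < (n - 1) * (m - 1) + 1" using S B by linarith
    then show ?thesis unfolding G using False by simp
  qed
qed


lemma G_vert:
  assumes "fst v < n" "fst w < n" "snd v < m" "snd w < m" "fst v \<noteq> fst w" "snd v \<noteq> snd w"
  shows "Gc n m v w \<noteq> snd v \<and> Gc n m v w \<noteq> snd w"
proof (cases "colK n (fst v) (fst w) = 0")
  case True
  then show ?thesis unfolding Gc_unfold[OF assms(5)]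
    using LatN_off[of m "snd v" "snd w"] LatN_off[of m "snd w" "snd v"] assms m3 by auto
next
  case False
  then show ?thesis unfolding Gc_unfold[OF assms(5)] using assms by auto
qed

lemma G_inj:
  assumes "fst v < n" "fst w < n" "snd v < m" "snd w < m" "fst v \<noteq> fst w" "snd v \<noteq> snd w"
    "fst w' < n" "snd w' < m" "fst v \<noteq> fst w'" "snd v \<noteq> snd w'" "w \<noteq> w'"
  shows "Gc n m v w \<noteq> Gc n m v w'"
proof
  assume eq: "Gc n m v w = Gc n m v w'"
  define i where "i = colK n (fst v) (fst w)"
  define i' where "i' = colK n (fst v) (fst w')"
  define sh where "sh = (if fst v < fst w then shiftN m (snd v) (snd w) else shiftN m (snd w) (snd v))"
  define sh' where "sh' = (if fst v < fst w' then shiftN m (snd v) (snd w') else shiftN m (snd w') (snd v))"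
  define la where "la = (if fst v < fst w then LatN m (snd v) (snd w) else LatN m (snd w) (snd v))"
  define la' where "la' = (if fst v < fst w' then LatN m (snd v) (snd w') else LatN m (snd w') (snd v))"
  have G: "Gc n m v w = (if i = 0 then la else m + (i - 1) * (m - 1) + (sh - 1))"
    unfolding Gc_unfold[OF assms(5)] i_def la_def sh_def by simp
  have G': "Gc n m v w' = (if i' = 0 then la' else m + (i' - 1) * (m - 1) + (sh' - 1))"
    unfolding Gc_unfold[OF assms(9)] i'_def la'_def sh'_def by simp
  have La: "la < m" "la' < m" using LatN_lt m3 unfolding la_def la'_def by auto
  have "sh \<le> m - 1" using shift_range[of "snd v" m "snd w"] shift_range[of "snd w" m "snd v"] assms
    unfolding sh_def by auto
  then have S: "sh - 1 < m - 1" using m3 by linarith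
  have "sh' \<le> m - 1" using shift_range[of "snd v" m "snd w'"] shift_range[of "snd w'" m "snd v"] assms
    unfolding sh'_def by auto
  then have S': "sh' - 1 < m - 1" using m3 by linarith
  have blk: "i = i' \<and> sh - 1 = sh' - 1" if "i \<noteq> 0" "i' \<noteq> 0"
  proof -
    have "(i - 1) * (m - 1) + (sh - 1) = (i' - 1) * (m - 1) + (sh' - 1)"
      using eq that unfolding G G' by simp
    then have "i - 1 = i' - 1 \<and> sh - 1 = sh' - 1" using block S S' by blast
    then show ?thesis using that by (metis One_nat_def Suc_pred neq0_conv)
  qed
  show False
  proof (cases "fst w = fst w'")
    case False
    have "i \<noteq> i'" unfolding i_def i'_def
      using colK_inj[of n "fst v" "fst w" "fst w'"] nev n4 assms False by auto
    then show False using eq La blk unfolding G G' by (auto split: if_splits)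
  next
    case True
    then have "snd w \<noteq> snd w'" using assms(11) by (simp add: prod_eq_iff)
    have ii: "i = i'" unfolding i_def i'_def using True by simp
    show False
    proof (cases "i = 0")
      case True
      then have "la = la'" using eq ii unfolding G G' by simp
      moreover have "la \<noteq> la'" unfolding la_def la'_def
        using \<open>fst w = fst w'\<close> \<open>snd w \<noteq> snd w'\<close> LatN_row[of m "snd v" "snd w" "snd w'"]
          LatN_col[of m "snd w" "snd v" "snd w'"] assms m3 by auto
      ultimately show False by simp
    next
      case False
      then have "sh - 1 = sh' - 1" using blk ii by simp
      moreover have "sh \<noteq> sh'" unfolding sh_def sh'_def
        using \<open>fst w = fst w'\<close> \<open>snd w \<noteq> snd w'\<close> shift_inj2[of "snd v" m "snd w" "snd w'"]
          shift_inj1[of "snd v" m "snd w" "snd w'"] assms by auto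
      moreover have "sh \<ge> 1" "sh' \<ge> 1"
        using shift_range[of "snd v" m "snd w"] shift_range[of "snd w" m "snd v"]
          shift_range[of "snd v" m "snd w'"] shift_range[of "snd w'" m "snd v"] assms
        unfolding sh_def sh'_def by auto
      ultimately show False by linarith
    qed
  qed
qed

end

lemma edge_mem: "{u, v} \<in> KxK_edges n m \<longleftrightarrow>
   fst u < n \<and> fst v < n \<and> snd u < m \<and> snd v < m \<and> fst u \<noteq> fst v \<and> snd u \<noteq> snd v"
  unfolding KxK_edges_def
  by (cases u; cases v) (auto simp: doubleton_eq_iff)

lemma edge_split:
  assumes "e \<in> KxK_edges n m" "v \<in> e"
  shows "\<exists>w. e = {v, w} \<and> fst v < n \<and> fst w < n \<and> snd v < m \<and> snd w < m \<and> fst v \<noteq> fst w \<and> snd v \<noteq> snd w"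
proof -
  obtain a b a' b' where e: "e = {(a, b), (a', b')}" "a < n" "a' < n" "b < m" "b' < m" "a \<noteq> a'" "b \<noteq> b'"
    using assms(1) unfolding KxK_edges_def by blast
  show ?thesis
  proof (cases "v = (a, b)")
    case True then show ?thesis using e by (intro exI[of _ "(a', b')"]) auto
  next
    case False then have "v = (a', b')" using assms(2) e by auto
    then show ?thesis using e by (intro exI[of _ "(a, b)"]) (auto simp: insert_commute)
  qed
qed

lemma construction:
  assumes "even n" "n \<ge> 4" "m \<ge> 3"
  shows "total_colouring (KxK_vertices n m) (KxK_edges n m) ((n - 1) * (m - 1) + 1) snd (ceK n m)"
proof -
  let ?k = "(n - 1) * (m - 1) + 1"
  have mk: "m \<le> ?k"
  proof -
    have "1 \<le> n - 1" using assms by simp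
    then have "1 * (m - 1) \<le> (n - 1) * (m - 1)" by (rule mult_le_mono1)
    then show ?thesis using assms by linarith
  qed
  have 1: "\<forall>v\<in>KxK_vertices n m. snd v < ?k" using mk by (auto simp: KxK_vertices_def)
  have 2: "\<forall>e\<in>KxK_edges n m. ceK n m e < ?k"
  proof
    fix e assume e: "e \<in> KxK_edges n m"
    then obtain v where "v \<in> e" unfolding KxK_edges_def by auto
    then obtain w where w: "e = {v, w}" "fst v < n" "fst w < n" "snd v < m" "snd w < m" "fst v \<noteq> fst w" "snd v \<noteq> snd w"
      using edge_split[OF e] by blast
    then show "ceK n m e < ?k" using ceK_G G_lt[OF assms] by simp
  qed
  have 3: "\<forall>u\<in>KxK_vertices n m. \<forall>v\<in>KxK_vertices n m. {u, v} \<in> KxK_edges n m \<longrightarrow> snd u \<noteq> snd v"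
    by (simp add: edge_mem)
  have 4: "\<forall>e\<in>KxK_edges n m. \<forall>f\<in>KxK_edges n m. e \<noteq> f \<and> e \<inter> f \<noteq> {} \<longrightarrow> ceK n m e \<noteq> ceK n m f"
  proof (intro ballI impI)
    fix e f assume e: "e \<in> KxK_edges n m" and f: "f \<in> KxK_edges n m" and ef: "e \<noteq> f \<and> e \<inter> f \<noteq> {}"
    then obtain v where v: "v \<in> e" "v \<in> f" by auto
    obtain w where w: "e = {v, w}" "fst v < n" "fst w < n" "snd v < m" "snd w < m" "fst v \<noteq> fst w" "snd v \<noteq> snd w"
      using edge_split[OF e v(1)] by blast
    obtain w' where w': "f = {v, w'}" "fst v < n" "fst w' < n" "snd v < m" "snd w' < m" "fst v \<noteq> fst w'" "snd v \<noteq> snd w'"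
      using edge_split[OF f v(2)] by blast
    have "w \<noteq> w'" using ef w w' by auto
    then show "ceK n m e \<noteq> ceK n m f" using w w' ceK_G G_inj[OF assms] by simp
  qed
  have 5: "\<forall>e\<in>KxK_edges n m. \<forall>v\<in>e. ceK n m e \<noteq> snd v"
  proof (intro ballI)
    fix e v assume e: "e \<in> KxK_edges n m" and v: "v \<in> e"
    obtain w where w: "e = {v, w}" "fst v < n" "fst w < n" "snd v < m" "snd w < m" "fst v \<noteq> fst w" "snd v \<noteq> snd w"
      using edge_split[OF e v] by blast
    then show "ceK n m e \<noteq> snd v" using ceK_G G_vert[OF assms] by simp
  qed
  show ?thesis unfolding total_colouring_def using 1 2 3 4 5 by blast
qed

lemma swap_edge: "e \<in> KxK_edges n m \<Longrightarrow> prod.swap ` e \<in> KxK_edges m n"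
proof -
  assume "e \<in> KxK_edges n m"
  then obtain a b a' b' where e: "e = {(a, b), (a', b')}" "a < n" "a' < n" "b < m" "b' < m" "a \<noteq> a'" "b \<noteq> b'"
    unfolding KxK_edges_def by blast
  then have "prod.swap ` e = {(b, a), (b', a')}" by auto
  then show ?thesis unfolding KxK_edges_def using e by blast
qed

lemma swap_transport:
  assumes "total_colouring (KxK_vertices m n) (KxK_edges m n) k cv ce"
  shows "total_colouring (KxK_vertices n m) (KxK_edges n m) k (cv \<circ> prod.swap) (\<lambda>e. ce (prod.swap ` e))"
proof -
  note T = assms[unfolded total_colouring_def]
  note t1 = T[THEN conjunct1] and t2 = T[THEN conjunct2, THEN conjunct1]
    and t3 = T[THEN conjunct2, THEN conjunct2, THEN conjunct1]
    and t4 = T[THEN conjunct2, THEN conjunct2, THEN conjunct2, THEN conjunct1]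
    and t5 = T[THEN conjunct2, THEN conjunct2, THEN conjunct2, THEN conjunct2]
  have sv: "prod.swap u \<in> KxK_vertices m n" if "u \<in> KxK_vertices n m" for u
    using that by (auto simp: KxK_vertices_def)
  have si: "prod.swap ` e \<noteq> prod.swap ` f" if "e \<noteq> f" for e f :: "(nat \<times> nat) set"
  proof
    assume "prod.swap ` e = prod.swap ` f"
    then have "prod.swap ` prod.swap ` e = prod.swap ` prod.swap ` f" by simp
    then show False using that by (simp add: image_comp)
  qed
  have 1: "\<forall>v\<in>KxK_vertices n m. (cv \<circ> prod.swap) v < k"
    using t1 sv by simp
  have 2: "\<forall>e\<in>KxK_edges n m. ce (prod.swap ` e) < k"
    using t2 swap_edge by blast
  have 3: "\<forall>u\<in>KxK_vertices n m. \<forall>v\<in>KxK_vertices n m. {u, v} \<in> KxK_edges n m \<longrightarrow> (cv \<circ> prod.swap) u \<noteq> (cv \<circ> prod.swap) v"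
  proof (intro ballI impI)
    fix u v assume uv: "u \<in> KxK_vertices n m" "v \<in> KxK_vertices n m" "{u, v} \<in> KxK_edges n m"
    have "prod.swap ` {u, v} = {prod.swap u, prod.swap v}" by simp
    then have "{prod.swap u, prod.swap v} \<in> KxK_edges m n" using swap_edge[OF uv(3)] by simp
    then show "(cv \<circ> prod.swap) u \<noteq> (cv \<circ> prod.swap) v"
      using bspec[OF bspec[OF t3 sv[OF uv(1)]] sv[OF uv(2)]] by simp
  qed
  have 4: "\<forall>e\<in>KxK_edges n m. \<forall>f\<in>KxK_edges n m. e \<noteq> f \<and> e \<inter> f \<noteq> {} \<longrightarrow> ce (prod.swap ` e) \<noteq> ce (prod.swap ` f)"
  proof (intro ballI impI)
    fix e f assume ef: "e \<in> KxK_edges n m" "f \<in> KxK_edges n m" "e \<noteq> f \<and> e \<inter> f \<noteq> {}"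
    have "prod.swap ` e \<inter> prod.swap ` f \<noteq> {}" using ef(3) by blast
    moreover have "prod.swap ` e \<noteq> prod.swap ` f" using si ef(3) by blast
    ultimately show "ce (prod.swap ` e) \<noteq> ce (prod.swap ` f)"
      using bspec[OF bspec[OF t4 swap_edge[OF ef(1)]] swap_edge[OF ef(2)]] by blast
  qed
  have 5: "\<forall>e\<in>KxK_edges n m. \<forall>v\<in>e. ce (prod.swap ` e) \<noteq> (cv \<circ> prod.swap) v"
  proof (intro ballI)
    fix e v assume ev: "e \<in> KxK_edges n m" "v \<in> e"
    have "prod.swap v \<in> prod.swap ` e" using ev(2) by blast
    then show "ce (prod.swap ` e) \<noteq> (cv \<circ> prod.swap) v"
      using bspec[OF bspec[OF t5 swap_edge[OF ev(1)]]] by simp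
  qed
  show ?thesis unfolding total_colouring_def by (rule conjI[OF 1 conjI[OF 2 conjI[OF 3 conjI[OF 4 5]]]])
qed

lemma colouring_exists:
  assumes "n \<ge> 3" "m \<ge> 3" "even n \<or> even m"
  shows "\<exists>cv ce. total_colouring (KxK_vertices n m) (KxK_edges n m) ((n - 1) * (m - 1) + 1) cv ce"
proof (cases "even n")
  case True
  then have "n \<noteq> 3" by auto
  then have "n \<ge> 4" using assms by linarith
  then show ?thesis using construction[OF True _ assms(2)] by blast
next
  case False
  then have ev1: "even m" using assms by blast
  then have "m \<noteq> 3" by auto
  then have ev: "even m" "m \<ge> 4" using assms ev1 by linarith+
  have "total_colouring (KxK_vertices m n) (KxK_edges m n) ((m - 1) * (n - 1) + 1) snd (ceK m n)"
    using construction[OF ev(1) ev(2) assms(1)] .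
  moreover have eq: "(m - 1) * (n - 1) = (n - 1) * (m - 1)" by (rule mult.commute)
  ultimately have "total_colouring (KxK_vertices m n) (KxK_edges m n) ((n - 1) * (m - 1) + 1) snd (ceK m n)"
    by (simp only: eq)
  then show ?thesis using swap_transport by blast
qed

lemma star_eq:
  assumes "a < n" "b < m"
  shows "{e \<in> KxK_edges n m. (a, b) \<in> e} = (\<lambda>w. {(a, b), w}) ` (({0..<n} - {a}) \<times> ({0..<m} - {b}))"
    (is "_ = _ ` ?W")
proof
  show "{e \<in> KxK_edges n m. (a, b) \<in> e} \<subseteq> (\<lambda>w. {(a, b), w}) ` ?W"
  proof
    fix e assume "e \<in> {e \<in> KxK_edges n m. (a, b) \<in> e}"
    then obtain w where "e = {(a, b), w}" "fst w < n" "snd w < m" "a \<noteq> fst w" "b \<noteq> snd w"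
      using edge_split[of e n m "(a, b)"] by auto
    then show "e \<in> (\<lambda>w. {(a, b), w}) ` ?W" by (intro image_eqI[of _ _ w]) (auto simp: mem_Times_iff)
  qed
  show "(\<lambda>w. {(a, b), w}) ` ?W \<subseteq> {e \<in> KxK_edges n m. (a, b) \<in> e}"
    using assms by (auto simp: edge_mem)
qed

lemma star_card:
  assumes "a < n" "b < m"
  shows "finite {e \<in> KxK_edges n m. (a, b) \<in> e} \<and> card {e \<in> KxK_edges n m. (a, b) \<in> e} = (n - 1) * (m - 1)"
proof -
  let ?W = "({0..<n} - {a}) \<times> ({0..<m} - {b})"
  have inj: "inj_on (\<lambda>w. {(a, b), w}) ?W"
    by (rule inj_onI) (auto simp: doubleton_eq_iff)
  have "card ?W = (n - 1) * (m - 1)" using assms by (simp add: card_cartesian_product)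
  then show ?thesis unfolding star_eq[OF assms] using card_image[OF inj] by simp
qed

lemma degree_eq:
  assumes "a < n" "b < m"
  shows "degree (KxK_edges n m) (a, b) = (n - 1) * (m - 1)"
  using star_card[OF assms] by (simp add: degree_def)

lemma lower_bound:
  assumes "n \<ge> 1" "m \<ge> 1" "total_colouring (KxK_vertices n m) (KxK_edges n m) k cv ce"
  shows "(n - 1) * (m - 1) + 1 \<le> k"
proof -
  let ?S = "{e \<in> KxK_edges n m. (0, 0) \<in> e}"
  have S: "finite ?S" "card ?S = (n - 1) * (m - 1)" using star_card[of 0 n 0 m] assms by auto
  have tc: "\<forall>e\<in>KxK_edges n m. ce e < k" "\<forall>v\<in>KxK_vertices n m. cv v < k"
    "\<forall>e\<in>KxK_edges n m. \<forall>f\<in>KxK_edges n m. e \<noteq> f \<and> e \<inter> f \<noteq> {} \<longrightarrow> ce e \<noteq> ce f"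
    "\<forall>e\<in>KxK_edges n m. \<forall>v\<in>e. ce e \<noteq> cv v"
    using assms(3) unfolding total_colouring_def by auto
  have inj: "inj_on ce ?S"
  proof (rule inj_onI)
    fix x y assume x: "x \<in> ?S" and y: "y \<in> ?S" and eq: "ce x = ce y"
    show "x = y"
    proof (rule ccontr)
      assume "x \<noteq> y"
      moreover have "x \<inter> y \<noteq> {}" using x y by auto
      moreover have "x \<in> KxK_edges n m" "y \<in> KxK_edges n m" using x y by auto
      ultimately have "ce x \<noteq> ce y" using tc(3) by blast
      then show False using eq by simp
    qed
  qed
  have nin: "cv (0, 0) \<notin> ce ` ?S"
  proof
    assume "cv (0, 0) \<in> ce ` ?S"
    then obtain x where x: "x \<in> ?S" "cv (0, 0) = ce x" by auto
    then have "x \<in> KxK_edges n m" "(0, 0) \<in> x" by auto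
    then have "ce x \<noteq> cv (0, 0)" using tc(4) by blast
    then show False using x(2) by simp
  qed
  have "(0, 0) \<in> KxK_vertices n m" using assms by (simp add: KxK_vertices_def)
  then have "cv (0, 0) < k" using tc(2) by blast
  moreover have "ce ` ?S \<subseteq> {..<k}" using tc(1) by auto
  ultimately have sub: "insert (cv (0, 0)) (ce ` ?S) \<subseteq> {..<k}" by simp
  have "card (insert (cv (0, 0)) (ce ` ?S)) = (n - 1) * (m - 1) + 1"
    using S nin card_image[OF inj] by simp
  moreover have "card (insert (cv (0, 0)) (ce ` ?S)) \<le> k"
    using card_mono[OF _ sub] by simp
  ultimately show ?thesis by simp
qed

theorem theorem3:
  fixes n m :: nat
  assumes "n \<ge> 3" and "m \<ge> 3" and "even n \<or> even m"
  shows "type_I (KxK_vertices n m) (KxK_edges n m) \<and>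
         total_chromatic_number (KxK_vertices n m) (KxK_edges n m) = (n - 1) * (m - 1) + 1"
proof -
  let ?k = "(n - 1) * (m - 1) + 1"
  have tcn: "total_chromatic_number (KxK_vertices n m) (KxK_edges n m) = ?k"
    unfolding total_chromatic_number_def
  proof (rule Least_equality)
    show "\<exists>cv ce. total_colouring (KxK_vertices n m) (KxK_edges n m) ?k cv ce"
      using colouring_exists[OF assms] .
    show "?k \<le> y" if "\<exists>cv ce. total_colouring (KxK_vertices n m) (KxK_edges n m) y cv ce" for y
      using that lower_bound[of n m y] assms by auto
  qed
  have img: "degree (KxK_edges n m) ` KxK_vertices n m = {(n - 1) * (m - 1)}"
  proof
    show "degree (KxK_edges n m) ` KxK_vertices n m \<subseteq> {(n - 1) * (m - 1)}"
      using degree_eq by (auto simp: KxK_vertices_def)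
    have "(0, 0) \<in> KxK_vertices n m" using assms by (simp add: KxK_vertices_def)
    then show "{(n - 1) * (m - 1)} \<subseteq> degree (KxK_edges n m) ` KxK_vertices n m"
      using degree_eq[of 0 n 0 m] assms by force
  qed
  have md: "max_degree (KxK_vertices n m) (KxK_edges n m) = (n - 1) * (m - 1)"
    unfolding max_degree_def img by simp
  show ?thesis using tcn md by (simp add: type_I_def)
qed

end
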